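(* Let $G$ and $H$ be graphs with at least two vertices each, with $V(G)\cap V(H)=\emptyset$, and let $K$ be a clique of $G$. Let $\{u_1,u_2\}$ be a top-two of $H$, and suppose there exists an acyclic digraph $D'$ with vertex set $V(G)\cup\{u_1,u_2\}$ such that $C(D')$ is $G$ together with $u_1,u_2$ as isolated vertices. If either $H$ has no edges or $H$ has no isolated vertices, then there exists an acyclic digraph $D$ such that (i) $C(D)=(G\ltimes_K H)\cup I_2$ if $H$ has no edges, and $C(D)=(G\ltimes_K H)\cup I_{k(H)}$ if $H$ has no isolated vertices; and (ii) $D$ has an acyclic ordering whose first $|V(G)|+2$ terms induce the digraph $D'$.
   Context: All graphs are finite and simple. For a digraph $D$, its competition graph $C(D)$ is the graph with vertex set $V(D)$ in which two distinct vertices $u,v$ are adjacent iff there is a vertex $x$ with arcs $(u,x),(v,x)\in A(D)$. The competition number $k(G)$ is the smallest nonnegative integer $k$ such that $G$ together with $k$ new isolated vertices is the competition graph of an acyclic digraph. $I_k$ is the edgeless graph on $k$ vertices; $X\cup I_k$ denotes the disjoint union of $X$ with $k$ new isolated vertices. An acyclic ordering of a digraph $D$ is an ordering of its vertices such that every arc goes from an earlier to a later vertex. A clique is a set of pairwise adjacent vertices (the empty set counts). For vertex-disjoint graphs $G,H$ and a clique $K$ of $G$, $G\ltimes_K H$ is the graph with vertex set $V(G)\cup V(H)$ and edge set $E(G)\cup E(H)\cup\{uv: u\in K, v\in V(H)\}$. For a graph $H$, a set $\{u,v\}$ of two distinct vertices is a top-two of $H$ if there exists an acyclic digraph $D$ with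 $C(D)=H\cup I_{k(H)}$ having an acyclic ordering whose first and second vertices are $u$ and $v$. *)

theory Defs
  imports Main
begin

text \<open>A finite simple graph: finite vertex set V, edge relation E (symmetric, irreflexive,
  contained in V x V). An edge uv is represented by both pairs (u,v) and (v,u).\<close>
definition graph :: "'a set \<Rightarrow> ('a \<times> 'a) set \<Rightarrow> bool" where
  "graph V E \<longleftrightarrow> finite V \<and> E \<subseteq> V \<times> V \<and> sym E \<and> irrefl E"

definition digraph :: "'a set \<Rightarrow> ('a \<times> 'a) set \<Rightarrow> bool" where
  "digraph V A \<longleftrightarrow> finite V \<and> A \<subseteq> V \<times> V"

definition acyclic_digraph :: "'a set \<Rightarrow> ('a \<times> 'a) set \<Rightarrow> bool" where
  "acyclic_digraph V A \<longleftrightarrow> digraph V A \<and> acyclic A"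

definition comp_edges :: "'a set \<Rightarrow> ('a \<times> 'a) set \<Rightarrow> ('a \<times> 'a) set" where
  "comp_edges V A = {(u, v). u \<in> V \<and> v \<in> V \<and> u \<noteq> v \<and> (\<exists>x. (u, x) \<in> A \<and> (v, x) \<in> A)}"

definition comp_graph_is :: "'a set \<Rightarrow> ('a \<times> 'a) set \<Rightarrow> 'a set \<Rightarrow> ('a \<times> 'a) set \<Rightarrow> 'a set \<Rightarrow> bool" where
  "comp_graph_is VD A V E I \<longleftrightarrow> finite I \<and> I \<inter> V = {} \<and> VD = V \<union> I \<and> comp_edges VD A = E"

definition competition_number :: "'a set \<Rightarrow> ('a \<times> 'a) set \<Rightarrow> nat" where
  "competition_number V E = (LEAST k. \<exists>I A. card I = k \<and> acyclic_digraph (V \<union> I) A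
       \<and> comp_graph_is (V \<union> I) A V E I)"

definition acyclic_ordering :: "'a set \<Rightarrow> ('a \<times> 'a) set \<Rightarrow> 'a list \<Rightarrow> bool" where
  "acyclic_ordering V A xs \<longleftrightarrow> distinct xs \<and> set xs = V \<and>
     (\<forall>i j. i < length xs \<longrightarrow> j < length xs \<longrightarrow> (xs ! i, xs ! j) \<in> A \<longrightarrow> i < j)"

definition is_clique :: "'a set \<Rightarrow> ('a \<times> 'a) set \<Rightarrow> 'a set \<Rightarrow> bool" where
  "is_clique V E K \<longleftrightarrow> K \<subseteq> V \<and> (\<forall>u\<in>K. \<forall>v\<in>K. u \<noteq> v \<longrightarrow> (u, v) \<in> E)"

definition ltimes_V :: "'a set \<Rightarrow> 'a set \<Rightarrow> 'a set" where
  "ltimes_V VG VH = VG \<union> VH"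

definition ltimes_E :: "('a \<times> 'a) set \<Rightarrow> 'a set \<Rightarrow> 'a set \<Rightarrow> ('a \<times> 'a) set \<Rightarrow> ('a \<times> 'a) set" where
  "ltimes_E EG K VH EH = EG \<union> EH \<union> {(u, v). u \<in> K \<and> v \<in> VH} \<union> {(v, u). u \<in> K \<and> v \<in> VH}"

definition top_two :: "'a set \<Rightarrow> ('a \<times> 'a) set \<Rightarrow> 'a \<Rightarrow> 'a \<Rightarrow> bool" where
  "top_two V E u v \<longleftrightarrow> u \<noteq> v \<and>
     (\<exists>I A xs. card I = competition_number V E \<and> acyclic_digraph (V \<union> I) A
        \<and> comp_graph_is (V \<union> I) A V E I
        \<and> acyclic_ordering (V \<union> I) A xs \<and> 2 \<le> length xs \<and> xs ! 0 = u \<and> xs ! 1 = v)"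

definition isolated_free :: "'a set \<Rightarrow> ('a \<times> 'a) set \<Rightarrow> bool" where
  "isolated_free V E \<longleftrightarrow> (\<forall>v\<in>V. \<exists>w. (v, w) \<in> E)"

end

theory Submission
  imports Defs
begin

lemma ord_iff:
  "acyclic_ordering V A xs \<longleftrightarrow> distinct xs \<and> set xs = V \<and>
     sorted_wrt (\<lambda>x y. (y,x)\<notin>A) xs \<and> (\<forall>x\<in>V. (x,x)\<notin>A)"
proof
  assume h: "acyclic_ordering V A xs"
  then show "distinct xs \<and> set xs = V \<and> sorted_wrt (\<lambda>x y. (y,x)\<notin>A) xs \<and> (\<forall>x\<in>V. (x,x)\<notin>A)"
    unfolding acyclic_ordering_def sorted_wrt_iff_nth_less
    by (metis in_set_conv_nth less_irrefl order.strict_trans)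
next
  assume h: "distinct xs \<and> set xs = V \<and> sorted_wrt (\<lambda>x y. (y,x)\<notin>A) xs \<and> (\<forall>x\<in>V. (x,x)\<notin>A)"
  show "acyclic_ordering V A xs"
    unfolding acyclic_ordering_def
  proof (intro conjI allI impI)
    fix i j assume ij: "i < length xs" "j < length xs" "(xs!i, xs!j) \<in> A"
    show "i < j"
    proof (rule ccontr)
      assume "\<not> i < j"
      then consider "i = j" | "j < i" by linarith
      then show False
      proof cases
        case 1 then show False using h ij by (metis nth_mem)
      next
        case 2 then show False using h ij unfolding sorted_wrt_iff_nth_less by blast
      qed
    qed
  qed (use h in auto)
qed

lemma topo:
  assumes "finite V" "acyclic A"
  shows "\<exists>xs. acyclic_ordering V A xs"
  using assms(1)
proof (induction rule: finite_psubset_induct)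
  case (psubset V)
  show ?case
  proof (cases "V = {}")
    case True
    then show ?thesis by (auto simp: acyclic_ordering_def)
  next
    case False
    then obtain x where x: "x \<in> V" by blast
    have "finite (V \<times> V)" using psubset by simp
    then have "finite (A \<inter> V \<times> V)" by (rule finite_subset[rotated]) blast
    moreover have "acyclic (A \<inter> V \<times> V)" by (rule acyclic_subset[OF assms(2)]) auto
    ultimately have w: "wf (A \<inter> V \<times> V)" by (rule finite_acyclic_wf)
    have "\<exists>z\<in>V. \<forall>y. (y, z) \<in> A \<inter> V \<times> V \<longrightarrow> y \<notin> V"
      using wf_eq_minimal[THEN iffD1, OF w, rule_format, OF x] .
    then obtain z where z1: "z \<in> V" and z2: "\<forall>y. (y, z) \<in> A \<inter> V \<times> V \<longrightarrow> y \<notin> V"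
      by (elim bexE)
    have sub: "V - {z} \<subset> V" using z1 by blast
    obtain ys where ys: "acyclic_ordering (V - {z}) A ys" using psubset(2)[OF sub] by (elim exE)
    have self: "\<forall>y. (y,y) \<notin> A"
    proof (intro allI notI)
      fix y assume "(y,y) \<in> A"
      then have "(y,y) \<in> A\<^sup>+" by (rule r_into_trancl')
      then show False using assms(2) unfolding acyclic_def by blast
    qed
    have o: "distinct ys" "set ys = V - {z}" "sorted_wrt (\<lambda>x y. (y,x)\<notin>A) ys"
      using ys unfolding ord_iff by auto
    have "\<forall>y\<in>set ys. (y,z) \<notin> A" using o(2) z1 z2 by blast
    then have "acyclic_ordering V A (z # ys)"
      unfolding ord_iff using o z1 self by auto
    then show ?thesis by blast
  qed
qed

lemma ord_acyclic:
  assumes o: "acyclic_ordering V A xs" and sub: "A \<subseteq> V \<times> V"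
  shows "acyclic A"
proof -
  define r where "r x = (SOME i. i < length xs \<and> xs ! i = x)" for x
  have r: "r x < length xs \<and> xs ! (r x) = x" if "x \<in> V" for x
  proof -
    have "\<exists>i. i < length xs \<and> xs ! i = x" using o that
      unfolding acyclic_ordering_def by (metis in_set_conv_nth)
    then show ?thesis unfolding r_def by (rule someI_ex)
  qed
  have "A \<subseteq> inv_image less_than r"
  proof
    fix p assume p: "p \<in> A"
    obtain a b where ab: "p = (a,b)" by force
    have "a \<in> V" "b \<in> V" using p ab sub by auto
    then show "p \<in> inv_image less_than r"
      using o r[of a] r[of b] p ab unfolding acyclic_ordering_def by auto
  qed
  then have "wf A" by (rule wf_subset[OF wf_inv_image[OF wf_less_than]])
  then show ?thesis by (rule wf_acyclic)
qed

lemma comp_edges_image: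
  assumes inj: "inj_on f W" and sub: "A \<subseteq> W \<times> W"
  shows "comp_edges (f`W) (map_prod f f ` A) = map_prod f f ` comp_edges W A"
proof
  show "comp_edges (f`W) (map_prod f f ` A) \<subseteq> map_prod f f ` comp_edges W A"
  proof
    fix p assume p: "p \<in> comp_edges (f`W) (map_prod f f ` A)"
    obtain u v where uv0: "p = (u,v)" by (cases p)
    define M where "M = map_prod f f ` A"
    have c: "u \<in> f`W \<and> v \<in> f`W \<and> u \<noteq> v \<and> (\<exists>x. (u, x) \<in> M \<and> (v, x) \<in> M)"
      using p uv0 unfolding comp_edges_def M_def by simp
    then obtain x where x: "(u, x) \<in> M" "(v, x) \<in> M" by blast
    from c have "u \<in> f`W" by blast
    then obtain a where a: "a \<in> W" "u = f a" by blast
    from c have "v \<in> f`W" by blast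
    then obtain b where b: "b \<in> W" "v = f b" by blast
    from x(1) obtain q where q: "q \<in> A" "(u,x) = map_prod f f q" unfolding M_def by (rule imageE)
    obtain a' y where q': "q = (a',y)" by (cases q)
    from x(2) obtain r where r: "r \<in> A" "(v,x) = map_prod f f r" unfolding M_def by (rule imageE)
    obtain b' y' where r': "r = (b',y')" by (cases r)
    have W': "a' \<in> W" "y \<in> W" "b' \<in> W" "y' \<in> W" using q q' r r' sub by auto
    have e: "f a' = f a" "f b' = f b" "f y = f y'" using q q' r r' a b by auto
    have "a' = a" by (rule inj_onD[OF inj e(1) W'(1) a(1)])
    moreover have "b' = b" by (rule inj_onD[OF inj e(2) W'(3) b(1)])
    moreover have "y = y'" by (rule inj_onD[OF inj e(3) W'(2) W'(4)])
    moreover have "a \<noteq> b" using c a b by auto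
    ultimately have "(a,b) \<in> comp_edges W A" using q q' r r' a b
      unfolding comp_edges_def by auto
    moreover have "p = map_prod f f (a,b)" using uv0 a b by simp
    ultimately show "p \<in> map_prod f f ` comp_edges W A" by blast
  qed
next
  show "map_prod f f ` comp_edges W A \<subseteq> comp_edges (f`W) (map_prod f f ` A)"
  proof
    fix p assume "p \<in> map_prod f f ` comp_edges W A"
    then obtain q where q: "q \<in> comp_edges W A" "p = map_prod f f q" by (rule imageE)
    obtain a b where ab: "q = (a,b)" by (cases q)
    have c: "a \<in> W" "b \<in> W" "a \<noteq> b" "\<exists>x. (a,x) \<in> A \<and> (b,x) \<in> A"
      using q(1) ab unfolding comp_edges_def by auto
    then obtain x where x: "(a,x) \<in> A" "(b,x) \<in> A" by blast
    have "f a \<noteq> f b" using inj_onD[OF inj _ c(1) c(2)] c(3) by blast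
    moreover have "(f a, f x) \<in> map_prod f f ` A" using x(1) by force
    moreover have "(f b, f x) \<in> map_prod f f ` A" using x(2) by force
    moreover have "f a \<in> f`W" "f b \<in> f`W" using c by auto
    ultimately have "(f a, f b) \<in> comp_edges (f`W) (map_prod f f ` A)"
      unfolding comp_edges_def
      apply (simp only: mem_Collect_eq case_prod_conv)
      apply (intro conjI exI[of _ "f x"])
      apply simp_all
      done
    then show "p \<in> comp_edges (f`W) (map_prod f f ` A)" using q ab by simp
  qed
qed

lemma ord_image:
  assumes inj: "inj_on f W" and sub: "A \<subseteq> W \<times> W" and o: "acyclic_ordering W A xs"
  shows "acyclic_ordering (f`W) (map_prod f f ` A) (map f xs)"
proof -
  have d: "distinct xs" "set xs = W" "sorted_wrt (\<lambda>x y. (y,x)\<notin>A) xs" "\<forall>x\<in>W. (x,x)\<notin>A"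
    using o unfolding ord_iff by auto
  have key: "(f y, f x) \<in> map_prod f f ` A \<Longrightarrow> x \<in> W \<Longrightarrow> y \<in> W \<Longrightarrow> (y,x) \<in> A" for x y
  proof -
    assume "(f y, f x) \<in> map_prod f f ` A" "x \<in> W" "y \<in> W"
    then obtain a b where "(a,b) \<in> A" "f a = f y" "f b = f x" by auto
    moreover have "a \<in> W" "b \<in> W" using calculation sub by auto
    ultimately show ?thesis using inj \<open>x \<in> W\<close> \<open>y \<in> W\<close> unfolding inj_on_def by metis
  qed
  have "sorted_wrt (\<lambda>x y. (f y, f x) \<notin> map_prod f f ` A) xs"
  proof (rule sorted_wrt_mono_rel[OF _ d(3)])
    fix x y assume "x \<in> set xs" "y \<in> set xs" "(y,x) \<notin> A"
    show "(f y, f x) \<notin> map_prod f f ` A"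
    proof
      assume "(f y, f x) \<in> map_prod f f ` A"
      then have "(y,x) \<in> A" by (rule key) (use d(2) \<open>x \<in> set xs\<close> \<open>y \<in> set xs\<close> in auto)
      then show False using \<open>(y,x) \<notin> A\<close> by blast
    qed
  qed
  moreover have "\<forall>z\<in>f`W. (z,z) \<notin> map_prod f f ` A"
  proof
    fix z assume "z \<in> f`W"
    then obtain x where x: "x \<in> W" "z = f x" by blast
    show "(z,z) \<notin> map_prod f f ` A"
    proof
      assume "(z,z) \<in> map_prod f f ` A"
      then have "(x,x) \<in> A" using x by (intro key) auto
      then show False using d(4) x by blast
    qed
  qed
  ultimately show ?thesis unfolding ord_iff
    using d inj by (auto simp: distinct_map sorted_wrt_map)
qed

lemma in_first2:
  assumes o: "acyclic_ordering W A (u1#u2#rest)" and sub: "A \<subseteq> W \<times> W"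
    and e: "(y,x) \<in> A" and x: "x \<in> {u1,u2}"
  shows "x = u2 \<and> y = u1"
proof -
  have y: "y \<in> W" using e sub by auto
  have "set (u1#u2#rest) = W" "sorted_wrt (\<lambda>x y. (y,x)\<notin>A) (u1#u2#rest)" "\<forall>x\<in>W. (x,x)\<notin>A"
    using o unfolding ord_iff by auto
  then show ?thesis using y e x by auto
qed

lemma comp_edges_mono:
  "V \<subseteq> V' \<Longrightarrow> A \<subseteq> A'' \<Longrightarrow> comp_edges V A \<subseteq> comp_edges V' A''"
  unfolding comp_edges_def by blast

lemma construct:
  fixes VG VH W K P :: "'a set" and EG EH A' AH :: "('a \<times> 'a) set"
  assumes finVG: "finite VG" and u1G: "u1 \<notin> VG" and u2G: "u2 \<notin> VG" and u12: "u1 \<noteq> u2"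
    and D': "acyclic_digraph (VG \<union> {u1,u2}) A'" and CD': "comp_edges (VG \<union> {u1,u2}) A' = EG"
    and K: "is_clique VG EG K"
    and WG: "W \<inter> VG = {}"
    and AH: "AH \<subseteq> W \<times> W" and CH: "comp_edges W AH = EH"
    and ordH: "acyclic_ordering W AH (u1#u2#rest)"
    and P1: "P \<subseteq> W - {u1,u2}" and P2: "\<forall>x\<in>P. \<forall>y. (y,x)\<in>AH \<longrightarrow> y\<in>VH"
    and P3: "\<forall>v\<in>VH. \<exists>x\<in>P. (v,x)\<in>AH"
  shows "\<exists>A L. acyclic_digraph (VG \<union> W) A \<and> comp_edges (VG \<union> W) A = ltimes_E EG K VH EH
     \<and> acyclic_ordering (VG \<union> W) A L \<and> set (take (card VG + 2) L) = VG \<union> {u1,u2}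
     \<and> A \<inter> (set (take (card VG + 2) L) \<times> set (take (card VG + 2) L)) = A'"
proof -
  define F where "F = VG \<union> {u1,u2}"
  have oH: "distinct (u1#u2#rest)" "set (u1#u2#rest) = W"
    "sorted_wrt (\<lambda>x y. (y,x)\<notin>AH) (u1#u2#rest)" "\<forall>x\<in>W. (x,x)\<notin>AH"
    using ordH unfolding ord_iff by auto
  have KG: "K \<subseteq> VG" using K unfolding is_clique_def by auto
  have A'F: "A' \<subseteq> F \<times> F" and finF: "finite F" and acA': "acyclic A'"
    using D' finVG unfolding acyclic_digraph_def digraph_def F_def by auto
  obtain L' where L': "acyclic_ordering F A' L'" using topo[OF finF acA'] by blast
  have oL': "distinct L'" "set L' = F" "sorted_wrt (\<lambda>x y. (y,x)\<notin>A') L'" "\<forall>x\<in>F. (x,x)\<notin>A'"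
    using L' unfolding ord_iff by auto
  have cardF: "card F = card VG + 2" using finVG u1G u2G u12 unfolding F_def by simp
  have lenL': "length L' = card VG + 2" using cardF oL' distinct_card by metis
  have restF: "set rest \<inter> F = {}" using oH WG unfolding F_def by auto
  have WF: "W \<inter> F = {u1,u2}" using oH WG unfolding F_def by auto
  have PF: "P \<inter> F = {}" using P1 WG unfolding F_def by auto
  define B where "B = AH - F \<times> F"
  have Btgt: "(y,x) \<in> B \<Longrightarrow> x \<notin> F" for x y
  proof
    assume yx: "(y,x) \<in> B" "x \<in> F"
    then have "x \<in> {u1,u2}" using AH WF unfolding B_def by auto
    then have "y = u1" using in_first2[OF ordH AH] yx unfolding B_def by blast
    then show False using yx \<open>x \<in> {u1,u2}\<close> unfolding B_def F_def by auto
  qed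
  have BW: "B \<subseteq> W \<times> W" using AH unfolding B_def by auto
  define A where "A = A' \<union> B \<union> K \<times> P"
  define L where "L = L' @ rest"
  have takeL: "take (card VG + 2) L = L'" using lenL' unfolding L_def by simp
  have AFF: "A \<inter> (F \<times> F) = A'" using A'F Btgt PF unfolding A_def by blast
  have setL: "set L = VG \<union> W" using oL' oH unfolding L_def F_def by auto
  have sub: "A \<subseteq> (VG \<union> W) \<times> (VG \<union> W)" using A'F BW KG P1 oH(2) unfolding A_def F_def by auto
  have ord: "acyclic_ordering (VG \<union> W) A L"
    unfolding ord_iff
  proof (intro conjI)
    show "distinct L" using oL' oH restF unfolding L_def by auto
    show "set L = VG \<union> W" by (rule setL)
    have s1: "sorted_wrt (\<lambda>x y. (y,x)\<notin>A) L'"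
    proof (rule sorted_wrt_mono_rel[OF _ oL'(3)])
      fix x y assume xy: "x \<in> set L'" "y \<in> set L'" "(y,x) \<notin> A'"
      show "(y,x) \<notin> A" using xy AFF oL'(2) by blast
    qed
    have s2: "sorted_wrt (\<lambda>x y. (y,x)\<notin>A) rest"
    proof (rule sorted_wrt_mono_rel[of rest "\<lambda>x y. (y,x)\<notin>AH"])
      fix x y assume xy: "x \<in> set rest" "y \<in> set rest" "(y,x) \<notin> AH"
      show "(y,x) \<notin> A" using xy restF A'F KG WG oH(2) unfolding A_def B_def by auto
    next
      show "sorted_wrt (\<lambda>x y. (y,x)\<notin>AH) rest" using oH(3) by simp
    qed
    have s3: "\<forall>x\<in>set L'. \<forall>y\<in>set rest. (y,x)\<notin>A"
      using restF A'F Btgt KG WG oH(2) oL'(2) unfolding A_def by fastforce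
    show "sorted_wrt (\<lambda>x y. (y,x)\<notin>A) L" unfolding L_def sorted_wrt_append
      using s1 s2 s3 by blast
    show "\<forall>x\<in>VG \<union> W. (x,x)\<notin>A"
    proof (intro ballI notI)
      fix x assume x: "x \<in> VG \<union> W" "(x,x) \<in> A"
      consider "(x,x) \<in> A'" | "(x,x) \<in> AH" | "x \<in> K" "x \<in> P"
        using x(2) unfolding A_def B_def by blast
      then show False
      proof cases
        case 1 then have "x \<in> F" using A'F by blast
        then show False using 1 oL'(4) by blast
      next
        case 2 then have "x \<in> W" using AH by blast
        then show False using 2 oH(4) by blast
      next
        case 3 then show False using KG P1 WG by blast
      qed
    qed
  qed
  have acyc: "acyclic_digraph (VG \<union> W) A"
    unfolding acyclic_digraph_def digraph_def
    using sub ord_acyclic[OF ord sub] finVG oH(2) by auto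
  have ce: "comp_edges (VG \<union> W) A = ltimes_E EG K VH EH"
  proof
    show "comp_edges (VG \<union> W) A \<subseteq> ltimes_E EG K VH EH"
    proof
      fix p assume "p \<in> comp_edges (VG \<union> W) A"
      then obtain a b x where p: "p = (a,b)" "a \<noteq> b" "a \<in> VG \<union> W" "b \<in> VG \<union> W"
        "(a,x) \<in> A" "(b,x) \<in> A" unfolding comp_edges_def by blast
      show "p \<in> ltimes_E EG K VH EH"
      proof (cases "x \<in> F")
        case True
        then have "(a,x) \<in> A'" "(b,x) \<in> A'" using p Btgt PF unfolding A_def by auto
        then have "(a,b) \<in> comp_edges F A'" using p A'F unfolding comp_edges_def by blast
        then show ?thesis using CD' p unfolding F_def ltimes_E_def by auto
      next
        case False
        then have ax: "(a,x) \<in> AH \<or> (a \<in> K \<and> x \<in> P)" and bx: "(b,x) \<in> AH \<or> (b \<in> K \<and> x \<in> P)"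
          using p A'F unfolding A_def B_def by auto
        show ?thesis
        proof (cases "(a,x) \<in> AH \<and> (b,x) \<in> AH")
          case True
          then have "(a,b) \<in> comp_edges W AH" using p AH unfolding comp_edges_def by blast
          then show ?thesis using CH p unfolding ltimes_E_def by auto
        next
          case False
          then consider "a \<in> K" "b \<in> K" | "a \<in> K" "x \<in> P" "(b,x) \<in> AH" | "b \<in> K" "x \<in> P" "(a,x) \<in> AH"
            using ax bx by blast
          then show ?thesis
          proof cases
            case 1 then show ?thesis using K p unfolding is_clique_def ltimes_E_def by auto
          next
            case 2 then show ?thesis using P2 p unfolding ltimes_E_def by auto
          next
            case 3 then show ?thesis using P2 p unfolding ltimes_E_def by auto
          qed
        qed
      qed
    qed
  next
    show "ltimes_E EG K VH EH \<subseteq> comp_edges (VG \<union> W) A"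
    proof -
      have FW: "F \<subseteq> VG \<union> W" using oH(2) unfolding F_def by auto
      have AA: "A' \<subseteq> A" unfolding A_def by blast
      have "comp_edges F A' \<subseteq> comp_edges (VG \<union> W) A" by (rule comp_edges_mono[OF FW AA])
      then have "EG \<subseteq> comp_edges (VG \<union> W) A" using CD' unfolding F_def by simp
      moreover have "EH \<subseteq> comp_edges (VG \<union> W) A"
      proof
        fix p assume "p \<in> EH"
        then obtain a b x where p: "p = (a,b)" "a \<noteq> b" "a \<in> W" "b \<in> W"
          "(a,x) \<in> AH" "(b,x) \<in> AH" using CH unfolding comp_edges_def by blast
        have "x \<notin> F"
        proof
          assume "x \<in> F"
          then have xu: "x \<in> {u1,u2}" using p AH WF by auto
          have "a = u1" using in_first2[OF ordH AH p(5) xu] by blast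
          moreover have "b = u1" using in_first2[OF ordH AH p(6) xu] by blast
          ultimately show False using p(2) by simp
        qed
        then have "(a,x) \<in> A" "(b,x) \<in> A" using p unfolding A_def B_def by auto
        then show "p \<in> comp_edges (VG \<union> W) A" using p unfolding comp_edges_def by blast
      qed
      moreover have key: "(u,v) \<in> comp_edges (VG \<union> W) A \<and> (v,u) \<in> comp_edges (VG \<union> W) A" if uK: "u \<in> K" and vH: "v \<in> VH" for u v
      proof -
        obtain x where x: "x \<in> P" "(v,x) \<in> AH" using P3 vH by blast
        have xF: "x \<notin> F" using x PF by blast
        have vxA: "(v,x) \<in> A" unfolding A_def B_def using x(2) xF by blast
        have uxA: "(u,x) \<in> A" unfolding A_def using uK x(1) by blast
        have uG: "u \<in> VG" using uK KG by blast
        have vW: "v \<in> W" using x(2) AH by blast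
        have uv: "u \<noteq> v" using uG vW WG by blast
        have "(u,v) \<in> comp_edges (VG \<union> W) A" unfolding comp_edges_def
          using vxA uxA uG vW uv by blast
        moreover have "(v,u) \<in> comp_edges (VG \<union> W) A" unfolding comp_edges_def
          using vxA uxA uG vW uv by blast
        ultimately show ?thesis by blast
      qed
      moreover have "{(u, v). u \<in> K \<and> v \<in> VH} \<subseteq> comp_edges (VG \<union> W) A"
      proof
        fix p assume "p \<in> {(u, v). u \<in> K \<and> v \<in> VH}"
        then obtain u v where "p = (u,v)" "u \<in> K" "v \<in> VH" by auto
        then show "p \<in> comp_edges (VG \<union> W) A" using key by simp
      qed
      moreover have "{(v, u). u \<in> K \<and> v \<in> VH} \<subseteq> comp_edges (VG \<union> W) A"
      proof
        fix p assume "p \<in> {(v, u). u \<in> K \<and> v \<in> VH}"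
        then obtain u v where "p = (v,u)" "u \<in> K" "v \<in> VH" by auto
        then show "p \<in> comp_edges (VG \<union> W) A" using key by simp
      qed
      ultimately show ?thesis unfolding ltimes_E_def by (intro Un_least)
    qed
  qed
  have t: "set (take (card VG + 2) L) = VG \<union> {u1,u2}" using takeL oL'(2) unfolding F_def by simp
  have a: "A \<inter> (set (take (card VG + 2) L) \<times> set (take (card VG + 2) L)) = A'"
    unfolding t using AFF unfolding F_def .
  show ?thesis
    apply (rule exI[of _ A], rule exI[of _ L])
    apply (intro conjI)
        apply (rule acyc)
       apply (rule ce)
      apply (rule ord)
     apply (rule t)
    apply (rule a)
    done
qed

lemma two_split:
  assumes "2 \<le> length xs" shows "xs = xs!0 # xs!1 # drop 2 xs"
proof -
  obtain a ys where a: "xs = a#ys" using assms by (cases xs) auto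
  moreover obtain b zs where "ys = b#zs" using assms a by (cases ys) auto
  ultimately show ?thesis by simp
qed

lemma cn_empty:
  assumes "finite V" shows "competition_number V {} = 0"
  unfolding competition_number_def
proof (rule Least_eq_0)
  have "acyclic ({} :: ('a \<times> 'a) set)" by (rule wf_acyclic) simp
  then show "\<exists>I A. card I = 0 \<and> acyclic_digraph (V \<union> I) A \<and> comp_graph_is (V \<union> I) A V {} I"
    using assms
    by (intro exI[of _ "{}"]) (auto simp: acyclic_digraph_def digraph_def comp_graph_is_def comp_edges_def)
qed

theorem proposition2p5:
  fixes VG VH K :: "'a set" and EG EH A' :: "('a \<times> 'a) set" and u1 u2 :: 'a
  assumes inf: "infinite (UNIV :: 'a set)"
    and G: "graph VG EG" and H: "graph VH EH"
    and cG: "card VG \<ge> 2" and cH: "card VH \<ge> 2"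
    and disj: "VG \<inter> VH = {}"
    and K: "is_clique VG EG K"
    and top: "top_two VH EH u1 u2"
    and D': "acyclic_digraph (VG \<union> {u1, u2}) A'"
    and CD': "comp_graph_is (VG \<union> {u1, u2}) A' VG EG {u1, u2}"
    and Hcase: "EH = {} \<or> isolated_free VH EH"
  shows "\<exists>VD A xs.
           acyclic_digraph VD A
         \<and> (EH = {} \<longrightarrow> (\<exists>I. card I = 2 \<and>
               comp_graph_is VD A (ltimes_V VG VH) (ltimes_E EG K VH EH) I))
         \<and> (isolated_free VH EH \<longrightarrow> (\<exists>I. card I = competition_number VH EH \<and>
               comp_graph_is VD A (ltimes_V VG VH) (ltimes_E EG K VH EH) I))
         \<and> acyclic_ordering VD A xs
         \<and> set (take (card VG + 2) xs) = VG \<union> {u1, u2}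
         \<and> A \<inter> (set (take (card VG + 2) xs) \<times> set (take (card VG + 2) xs)) = A'"
proof -
  have finVG: "finite VG" using G unfolding graph_def by auto
  have finVH: "finite VH" and EHsub: "EH \<subseteq> VH \<times> VH" using H unfolding graph_def by auto
  have u1G: "u1 \<notin> VG" and u2G: "u2 \<notin> VG" and CEG: "comp_edges (VG \<union> {u1,u2}) A' = EG"
    using CD' unfolding comp_graph_is_def by auto
  obtain I AH xs where u12: "u1 \<noteq> u2" and Icard: "card I = competition_number VH EH"
    and dH: "acyclic_digraph (VH \<union> I) AH" and cgH: "comp_graph_is (VH \<union> I) AH VH EH I"
    and oH: "acyclic_ordering (VH \<union> I) AH xs" and len: "2 \<le> length xs"
    and x0: "xs!0 = u1" and x1: "xs!1 = u2"
    using top unfolding top_two_def by blast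
  have finI: "finite I" and IVH: "I \<inter> VH = {}" and CEH: "comp_edges (VH \<union> I) AH = EH"
    using cgH unfolding comp_graph_is_def by auto
  have AHsub: "AH \<subseteq> (VH \<union> I) \<times> (VH \<union> I)" using dH unfolding acyclic_digraph_def digraph_def by auto
  define rest where "rest = drop 2 xs"
  have xsr: "xs = u1 # u2 # rest" using two_split[OF len] x0 x1 unfolding rest_def by simp
  have VHne: "VH \<noteq> {}" using cH by auto
  have oHd: "distinct xs" "set xs = VH \<union> I" using oH unfolding acyclic_ordering_def by auto
  show ?thesis
  proof (cases "EH = {}")
    case True
    have "card I = 0" using Icard cn_empty[OF finVH] True by simp
    then have I0: "I = {}" using finI by simp
    have setxs: "set xs = VH" using oHd I0 by simp
    have fin1: "finite (VG \<union> VH)" using finVG finVH by simp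
    obtain i1 where i1: "i1 \<notin> VG \<union> VH" using ex_new_if_finite[OF inf fin1] by blast
    have fin2: "finite (VG \<union> VH \<union> {i1})" using fin1 by simp
    obtain i2 where i2: "i2 \<notin> VG \<union> VH \<union> {i1}" using ex_new_if_finite[OF inf fin2] by blast
    define ys where "ys = xs @ [i1, i2]"
    define W where "W = VH \<union> {i1, i2}"
    define AH2 where "AH2 = {(ys!j, ys!(j+2)) | j. j + 2 < length ys}"
    define P where "P = {ys!(j+2) | j. j + 2 < length ys}"
    have dys: "distinct ys" using oHd(1) i1 i2 setxs unfolding ys_def by auto
    have sys: "set ys = W" using setxs unfolding ys_def W_def by auto
    have lys: "length ys = length xs + 2" unfolding ys_def by simp
    have ysr: "ys = u1 # u2 # (rest @ [i1, i2])" using xsr unfolding ys_def by simp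
    have ysxs: "ys ! k = xs ! k" if "k < length xs" for k
      using that unfolding ys_def by (simp add: nth_append)
    have inAH2: "(a, b) \<in> AH2 \<longleftrightarrow> (\<exists>j. j + 2 < length ys \<and> a = ys!j \<and> b = ys!(j+2))" for a b
      unfolding AH2_def by blast
    have AH2sub: "AH2 \<subseteq> W \<times> W"
    proof
      fix p assume "p \<in> AH2"
      then obtain j where "j + 2 < length ys" "p = (ys!j, ys!(j+2))" unfolding AH2_def by blast
      moreover have "j < length ys" using calculation(1) by simp
      ultimately show "p \<in> W \<times> W" using sys nth_mem[of j ys] nth_mem[of "j+2" ys] by simp
    qed
    have ordW: "acyclic_ordering W AH2 ys"
      unfolding acyclic_ordering_def
    proof (intro conjI allI impI)
      fix i k assume ik: "i < length ys" "k < length ys" "(ys!i, ys!k) \<in> AH2"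
      then obtain j where j: "j + 2 < length ys" "ys!i = ys!j" "ys!k = ys!(j+2)"
        using inAH2 by blast
      have jl: "j < length ys" using j(1) by simp
      have "i = j" using nth_eq_iff_index_eq[OF dys ik(1) jl] j(2) by simp
      moreover have "k = j + 2" using nth_eq_iff_index_eq[OF dys ik(2) j(1)] j(3) by simp
      ultimately show "i < k" by simp
    qed (use dys sys in auto)
    have ordW': "acyclic_ordering W AH2 (u1 # u2 # (rest @ [i1, i2]))" using ordW ysr by simp
    have CH2: "comp_edges W AH2 = EH"
    proof -
      have "comp_edges W AH2 = {}"
      proof (rule ccontr)
        assume "comp_edges W AH2 \<noteq> {}"
        then obtain a b x where ab: "a \<noteq> b" "(a,x) \<in> AH2" "(b,x) \<in> AH2"
          unfolding comp_edges_def by blast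
        obtain j where j: "j + 2 < length ys" "a = ys!j" "x = ys!(j+2)" using ab(2) inAH2 by blast
        obtain k where k: "k + 2 < length ys" "b = ys!k" "x = ys!(k+2)" using ab(3) inAH2 by blast
        have "j + 2 = k + 2" using nth_eq_iff_index_eq[OF dys j(1) k(1)] j k by simp
        then show False using ab j k by simp
      qed
      then show ?thesis using True by simp
    qed
    have WG: "W \<inter> VG = {}" using disj i1 i2 unfolding W_def by auto
    have P1: "P \<subseteq> W - {u1, u2}"
    proof
      fix x assume "x \<in> P"
      then obtain j where j: "j + 2 < length ys" "x = ys!(j+2)" unfolding P_def by blast
      have xW: "x \<in> W" using j sys nth_mem[of "j+2" ys] by simp
      have l0: "0 < length ys" and l1: "1 < length ys" using j(1) by linarith+
      have "x \<noteq> ys!0" using nth_eq_iff_index_eq[OF dys j(1) l0] j(2) by simp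
      moreover have "x \<noteq> ys!1" using nth_eq_iff_index_eq[OF dys j(1) l1] j(2) by simp
      moreover have "ys!0 = u1" "ys!1 = u2" using ysr by simp_all
      ultimately show "x \<in> W - {u1, u2}" using xW by simp
    qed
    have P2: "\<forall>x\<in>P. \<forall>y. (y,x)\<in>AH2 \<longrightarrow> y\<in>VH"
    proof (intro ballI allI impI)
      fix x y assume x: "x \<in> P" and yx: "(y,x) \<in> AH2"
      obtain j where j: "j + 2 < length ys" "x = ys!(j+2)" using x unfolding P_def by blast
      obtain k where k: "k + 2 < length ys" "y = ys!k" "x = ys!(k+2)" using yx inAH2 by blast
      have kl: "k < length xs" using k(1) lys by simp
      then show "y \<in> VH" using k(2) ysxs[OF kl] setxs nth_mem[OF kl] by simp
    qed
    have P3: "\<forall>v\<in>VH. \<exists>x\<in>P. (v,x)\<in>AH2"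
    proof
      fix v assume "v \<in> VH"
      then obtain k where k: "k < length xs" "v = xs!k" using setxs by (metis in_set_conv_nth)
      have kk: "k + 2 < length ys" using k lys by simp
      have "ys!(k+2) \<in> P" unfolding P_def using kk by blast
      moreover have "(v, ys!(k+2)) \<in> AH2" using inAH2 kk k ysxs by auto
      ultimately show "\<exists>x\<in>P. (v,x)\<in>AH2" by blast
    qed
    obtain A L where AL: "acyclic_digraph (VG \<union> W) A" "comp_edges (VG \<union> W) A = ltimes_E EG K VH EH"
      "acyclic_ordering (VG \<union> W) A L" "set (take (card VG + 2) L) = VG \<union> {u1,u2}"
      "A \<inter> (set (take (card VG + 2) L) \<times> set (take (card VG + 2) L)) = A'"
      using construct[OF finVG u1G u2G u12 D' CEG K WG AH2sub CH2 ordW' P1 P2 P3] by blast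
    have i12: "i1 \<noteq> i2" using i2 by blast
    have cI: "card {i1, i2} = 2" using i12 by simp
    have cg: "comp_graph_is (VG \<union> W) A (ltimes_V VG VH) (ltimes_E EG K VH EH) {i1, i2}"
      unfolding comp_graph_is_def ltimes_V_def using AL(2) i1 i2 unfolding W_def by auto
    have niso: "\<not> isolated_free VH EH" using True VHne unfolding isolated_free_def by auto
    show ?thesis
      apply (rule exI[of _ "VG \<union> W"], rule exI[of _ A], rule exI[of _ L])
      using AL cI cg niso by blast
  next
    case False
    then have iso: "isolated_free VH EH" using Hcase by simp
    define T where "T = I \<inter> VG"
    have finT: "finite T" using finI unfolding T_def by simp
    have finU: "finite (VG \<union> VH \<union> I)" using finVG finVH finI by simp
    have "infinite (UNIV - (VG \<union> VH \<union> I))" by (rule Diff_infinite_finite[OF finU inf])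
    then obtain J where J: "finite J" "card J = card T" "J \<subseteq> UNIV - (VG \<union> VH \<union> I)"
      using infinite_arbitrarily_large by blast
    obtain h where h: "bij_betw h T J" using finite_same_card_bij[OF finT J(1) J(2)[symmetric]] by blast
    define f where "f x = (if x \<in> T then h x else x)" for x
    have hJ: "x \<in> T \<Longrightarrow> h x \<in> J" for x using bij_betw_apply[OF h] .
    have injh: "inj_on h T" using h by (rule bij_betw_imp_inj_on)
    have injf: "inj_on f (VH \<union> I)"
    proof (rule inj_onI)
      fix x y assume xy: "x \<in> VH \<union> I" "y \<in> VH \<union> I" "f x = f y"
      show "x = y"
      proof (cases "x \<in> T")
        case xT: True
        show ?thesis
        proof (cases "y \<in> T")
          case True
          then show ?thesis using xT xy injh unfolding f_def by (simp add: inj_on_def)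
        next
          case False
          then have "f y = y" unfolding f_def by simp
          moreover have "f x \<in> J" using xT hJ unfolding f_def by simp
          ultimately show ?thesis using xy J(3) by auto
        qed
      next
        case xT: False
        show ?thesis
        proof (cases "y \<in> T")
          case True
          then have "f y \<in> J" using hJ unfolding f_def by simp
          moreover have "f x = x" using xT unfolding f_def by simp
          ultimately show ?thesis using xy J(3) by auto
        next
          case False
          then show ?thesis using xT xy unfolding f_def by simp
        qed
      qed
    qed
    have fVH: "f v = v" if "v \<in> VH" for v using that IVH unfolding f_def T_def by auto
    have fu1: "f u1 = u1" and fu2: "f u2 = u2" using u1G u2G unfolding f_def T_def by auto
    define W where "W = f ` (VH \<union> I)"
    define AH' where "AH' = map_prod f f ` AH"
    have WVH: "W = VH \<union> f ` I" unfolding W_def using fVH by force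
    have AH'sub: "AH' \<subseteq> W \<times> W" using AHsub unfolding AH'_def W_def by auto
    have EHfix: "map_prod f f ` EH = EH"
    proof -
      have "map_prod f f ` EH = id ` EH"
        by (rule image_cong) (use EHsub fVH in auto)
      then show ?thesis by simp
    qed
    have CH': "comp_edges W AH' = EH"
      unfolding W_def AH'_def comp_edges_image[OF injf AHsub] CEH EHfix ..
    have ord': "acyclic_ordering W AH' (map f xs)"
      unfolding W_def AH'_def by (rule ord_image[OF injf AHsub oH])
    have ord'': "acyclic_ordering W AH' (u1 # u2 # map f rest)"
      using ord' xsr fu1 fu2 by simp
    have fIG: "f ` I \<inter> VG = {}"
    proof -
      have "f x \<notin> VG" if "x \<in> I" for x
      proof (cases "x \<in> T")
        case True then show ?thesis using hJ J(3) unfolding f_def by auto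
      next
        case False then show ?thesis using that unfolding f_def T_def by auto
      qed
      then show ?thesis by blast
    qed
    have fIH: "f ` I \<inter> VH = {}"
    proof -
      have "f x \<notin> VH" if "x \<in> I" for x
      proof (cases "x \<in> T")
        case True then show ?thesis using hJ J(3) unfolding f_def by auto
      next
        case False then show ?thesis using that IVH unfolding f_def by auto
      qed
      then show ?thesis by blast
    qed
    have WG: "W \<inter> VG = {}" using WVH fIG disj by auto
    define P where "P = {x. \<exists>a b. a \<noteq> b \<and> (a,x) \<in> AH' \<and> (b,x) \<in> AH'}"
    have P1: "P \<subseteq> W - {u1, u2}"
    proof
      fix x assume "x \<in> P"
      then obtain a b where ab: "a \<noteq> b" "(a,x) \<in> AH'" "(b,x) \<in> AH'" unfolding P_def by blast
      have "x \<in> W" using ab(2) AH'sub by blast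
      moreover have "x \<notin> {u1, u2}"
      proof
        assume xu: "x \<in> {u1, u2}"
        have "a = u1" using in_first2[OF ord'' AH'sub ab(2) xu] by blast
        moreover have "b = u1" using in_first2[OF ord'' AH'sub ab(3) xu] by blast
        ultimately show False using ab(1) by simp
      qed
      ultimately show "x \<in> W - {u1, u2}" by blast
    qed
    have P2: "\<forall>x\<in>P. \<forall>y. (y,x)\<in>AH' \<longrightarrow> y\<in>VH"
    proof (intro ballI allI impI)
      fix x y assume x: "x \<in> P" and yx: "(y,x) \<in> AH'"
      obtain a b where ab: "a \<noteq> b" "(a,x) \<in> AH'" "(b,x) \<in> AH'" using x unfolding P_def by blast
      obtain c where c: "c \<noteq> y" "(c,x) \<in> AH'" using ab by metis
      have "y \<in> W" "c \<in> W" using yx c AH'sub by auto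
      then have "(y,c) \<in> comp_edges W AH'" using yx c unfolding comp_edges_def by auto
      then show "y \<in> VH" using CH' EHsub by auto
    qed
    have P3: "\<forall>v\<in>VH. \<exists>x\<in>P. (v,x)\<in>AH'"
    proof
      fix v assume "v \<in> VH"
      then obtain w where "(v,w) \<in> EH" using iso unfolding isolated_free_def by blast
      then have "(v,w) \<in> comp_edges W AH'" using CH' by simp
      then obtain x where "v \<noteq> w" "(v,x) \<in> AH'" "(w,x) \<in> AH'" unfolding comp_edges_def by blast
      then show "\<exists>x\<in>P. (v,x)\<in>AH'" unfolding P_def by blast
    qed
    obtain A L where AL: "acyclic_digraph (VG \<union> W) A" "comp_edges (VG \<union> W) A = ltimes_E EG K VH EH"
      "acyclic_ordering (VG \<union> W) A L" "set (take (card VG + 2) L) = VG \<union> {u1,u2}"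
      "A \<inter> (set (take (card VG + 2) L) \<times> set (take (card VG + 2) L)) = A'"
      using construct[OF finVG u1G u2G u12 D' CEG K WG AH'sub CH' ord'' P1 P2 P3] by blast
    have cI: "card (f ` I) = competition_number VH EH"
      using card_image[OF inj_on_subset[OF injf]] Icard by auto
    have cg: "comp_graph_is (VG \<union> W) A (ltimes_V VG VH) (ltimes_E EG K VH EH) (f ` I)"
      unfolding comp_graph_is_def ltimes_V_def using AL(2) finI fIG fIH WVH by auto
    show ?thesis
      apply (rule exI[of _ "VG \<union> W"], rule exI[of _ A], rule exI[of _ L])
      using AL cI cg False by blast
  qed
qed

end
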